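(* Let $I\subseteq\mathbb{R}$ be an open interval, let $f\colon I\to(0,\infty)$ be a differentiable, concave and strictly increasing function, let $s,t\in I$ with $s<t$, and let $\lambda\in(0,1)$. Then $$f((1-\lambda)s+\lambda t)\leq \frac{f'(s)}{f'(t)}\cdot\big((1-\lambda)f(s)+\lambda f(t)\big).$$ *)

theory Defs
  imports "HOL-Analysis.Analysis"
begin

end

theory Submission
  imports Defs
begin

lemma tang:
  fixes I :: "real set" and f :: "real \<Rightarrow> real"
  assumes "open I" "is_interval I" "\<And>x. x \<in> I \<Longrightarrow> f differentiable (at x)"
    "concave_on I f" "c \<in> I" "y \<in> I"
  shows "f y \<le> f c + deriv f c * (y - c)"
proof -
  have d: "(f has_field_derivative deriv f c) (at c)"
    using assms(3)[OF assms(5)] DERIV_deriv_iff_real_differentiable by blast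
  have "(-f y) - (-f c) \<ge> (- deriv f c) * (y - c)"
    apply (rule convex_on_imp_above_tangent[where A=I])
    using assms(4) apply (simp add: concave_on_def)
    using assms(2) apply (simp add: is_interval_connected)
    using assms(1,5) apply (simp add: interior_open)
    using assms(6) apply simp
    using DERIV_minus[OF d] by (rule has_field_derivative_at_within)
  then show ?thesis by linarith
qed

theorem lemma6:
  fixes I :: "real set" and f :: "real \<Rightarrow> real" and s t lam :: real
  assumes "open I" and "is_interval I"
    and "\<And>x. x \<in> I \<Longrightarrow> f x > 0"
    and "\<And>x. x \<in> I \<Longrightarrow> f differentiable (at x)"
    and "concave_on I f"
    and "strict_mono_on I f"
    and "s \<in> I" and "t \<in> I" and "s < t"
    and "0 < lam" and "lam < 1"
  shows "f ((1 - lam) * s + lam * t) \<le> deriv f s / deriv f t * ((1 - lam) * f s + lam * f t)"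
proof -
  have T: "f y \<le> f c + deriv f c * (y - c)" if "c \<in> I" "y \<in> I" for c y
    using tang[of I f c y] assms(1,2,4,5) that by blast
  define a where "a = deriv f s"
  define b where "b = deriv f t"
  define x where "x = (1 - lam) * s + lam * t"
  define M where "M = (1 - lam) * f s + lam * f t"
  have xI: "x \<in> I"
    using convexD[OF is_interval_convex[OF assms(2)] assms(7,8), of "1 - lam" lam] assms(10,11)
    unfolding x_def by simp
  obtain e where e: "e > 0" "ball t e \<subseteq> I" using assms(1,8) open_contains_ball by blast
  have zI: "t + e/2 \<in> I" using e by (intro subsetD[OF e(2)]) (auto simp: dist_real_def)
  have c1: "f t < f (t + e/2)" using assms(6) zI assms(8) e(1) unfolding strict_mono_on_def by simp
  have c2: "f (t + e/2) \<le> f t + b * (e/2)" using T[OF assms(8) zI] b_def by simp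
  have bpos: "b > 0"
  proof (rule ccontr)
    assume "\<not> b > 0"
    hence "b * (e/2) \<le> 0" using e(1) by (intro mult_nonpos_nonneg) auto
    thus False using c1 c2 by linarith
  qed
  have h1: "f x \<le> f s + a * (x - s)" using T[OF assms(7) xI] a_def by simp
  have h2: "f s \<le> f t + b * (s - t)" using T[OF assms(8,7)] b_def by simp
  have h3: "f t \<le> f s + a * (t - s)" using T[OF assms(7,8)] a_def by simp
  have ab: "b * (t - s) \<le> a * (t - s)" using h2 h3 by (simp add: algebra_simps)
  hence ab': "b \<le> a" using assms(9) by simp
  have xs: "x - s = lam * (t - s)" unfolding x_def by (simp add: algebra_simps)
  have Mge: "M \<ge> f s + lam * b * (t - s)"
  proof -
    have "lam * (b * (t - s)) \<le> lam * (f t - f s)" using h2 assms(10)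
      by (intro mult_left_mono) (auto simp: algebra_simps)
    thus ?thesis unfolding M_def by (simp add: algebra_simps)
  qed
  have d1: "f x - M \<le> lam * (t - s) * (a - b)"
    using h1 Mge xs by (simp add: algebra_simps)
  have fs: "f s > 0" using assms(3,7) by simp
  have lb: "lam * (t - s) * b \<le> M" using Mge fs by (simp add: algebra_simps)
  have "b * (f x - M) \<le> b * (lam * (t - s) * (a - b))"
    using d1 bpos by (intro mult_left_mono) auto
  also have "\<dots> = (lam * (t - s) * b) * (a - b)" by (simp add: algebra_simps)
  also have "\<dots> \<le> M * (a - b)" using lb ab' by (intro mult_right_mono) auto
  finally have "b * f x \<le> a * M" by (simp add: algebra_simps)
  hence "f x \<le> a * M / b" using bpos by (simp add: field_simps)
  thus ?thesis unfolding x_def M_def a_def b_def by simp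
qed

end
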